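(* Let $f_{\mu_1\cdots\mu_p}$ be a rank-$p$ antisymmetric affine tensor field on $(M,g)$ and let $h_{\mu_1\cdots\mu_p}$ be a covariantly constant antisymmetric tensor field of the same rank $p$ ($\nabla_\sigma h_{\mu_1\cdots\mu_p}=0$). Then the symmetric tensor field $$K_{\mu\nu}=f_{(\mu|\rho_1\cdots\rho_{p-1}|}\,h_{\nu)}{}^{\rho_1\cdots\rho_{p-1}}$$ is a rank-$2$ symmetric affine tensor field, i.e. $\nabla_\sigma\nabla_{(\mu}K_{\nu\rho)}=0$.
   Context: $(M,g)$ is a smooth $n$-dimensional pseudo-Riemannian manifold with Levi-Civita connection $\nabla$; indices are raised and lowered with $g$. Symmetrization $(\cdots)$ and antisymmetrization $[\cdots]$ over $k$ indices carry weight $1/k!$, and indices enclosed in vertical bars $|\cdots|$ are excluded from (anti)symmetrization. A rank-$p$ antisymmetric affine tensor field (AAT) is a totally antisymmetric tensor field $f_{\mu_1\cdots\mu_p}=f_{[\mu_1\cdots\mu_p]}$ satisfying $\nabla_\mu\nabla_{(\nu}f_{\rho_1)\rho_2\cdots\rho_p}=0$. A rank-$q$ symmetric affine tensor field (SAT) is a totally symmetric tensor field $K_{\mu_1\cdots\mu_q}=K_{(\mu_1\cdots\mu_q)}$ satisfying $\nabla_\mu\nabla_{(\nu}K_{\rho_1\cdots\rho_q)}=0$. *)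

theory Defs
  imports "HOL-Analysis.Analysis" "HOL-Combinatorics.Permutations"
begin

text \<open>Local-coordinate model: a chart domain U (open subset of R^n, coordinates indexed
by a finite type 'n). A covariant tensor field of rank r is a function
T :: point => index list => real, where only index lists of length r matter.\<close>

definition pd :: "'n::finite \<Rightarrow> (real^'n \<Rightarrow> real) \<Rightarrow> real^'n \<Rightarrow> real" where
  "pd i F x = deriv (\<lambda>t. F (x + t *\<^sub>R axis i 1)) 0"

fun iterpd :: "'n::finite list \<Rightarrow> (real^'n \<Rightarrow> real) \<Rightarrow> (real^'n \<Rightarrow> real)" where
  "iterpd [] F = F"
| "iterpd (i # is) F = pd i (iterpd is F)"

definition Cinf_on :: "(real^'n::finite) set \<Rightarrow> (real^'n \<Rightarrow> real) \<Rightarrow> bool" where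
  "Cinf_on U F \<longleftrightarrow> (\<forall>is. iterpd is F differentiable_on U)"

definition metric_field :: "(real^'n::finite) set \<Rightarrow> (real^'n \<Rightarrow> real^'n^'n) \<Rightarrow> bool" where
  "metric_field U G \<longleftrightarrow>
     (\<forall>x\<in>U. transpose (G x) = G x \<and> invertible (G x)) \<and>
     (\<forall>i j. Cinf_on U (\<lambda>x. G x $ i $ j))"

definition ginv :: "(real^'n::finite \<Rightarrow> real^'n^'n) \<Rightarrow> real^'n \<Rightarrow> 'n \<Rightarrow> 'n \<Rightarrow> real" where
  "ginv G x i j = matrix_inv (G x) $ i $ j"

definition christoffel :: "(real^'n::finite \<Rightarrow> real^'n^'n) \<Rightarrow> real^'n \<Rightarrow> 'n \<Rightarrow> 'n \<Rightarrow> 'n \<Rightarrow> real" where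
  "christoffel G x l m n = (1/2) * (\<Sum>k\<in>UNIV. ginv G x l k *
      (pd m (\<lambda>y. G y $ k $ n) x + pd n (\<lambda>y. G y $ k $ m) x - pd k (\<lambda>y. G y $ m $ n) x))"

text \<open>Levi-Civita covariant derivative of a covariant tensor field; the derivative
index is placed first: (nabla T)_{s j1...jr} = nabla_s T_{j1...jr}.\<close>
fun nabla :: "(real^'n::finite \<Rightarrow> real^'n^'n) \<Rightarrow> (real^'n \<Rightarrow> 'n list \<Rightarrow> real)
              \<Rightarrow> real^'n \<Rightarrow> 'n list \<Rightarrow> real" where
  "nabla G T x [] = 0"
| "nabla G T x (s # js) = pd s (\<lambda>y. T y js) x
     - (\<Sum>k<length js. \<Sum>l\<in>UNIV. christoffel G x l s (js ! k) * T x (js[k := l]))"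

definition perm_idx :: "(nat \<Rightarrow> nat) \<Rightarrow> 'a list \<Rightarrow> 'a list" where
  "perm_idx \<sigma> is = map (\<lambda>k. is ! \<sigma> k) [0..<length is]"

definition symmetrize :: "nat set \<Rightarrow> ('a list \<Rightarrow> real) \<Rightarrow> 'a list \<Rightarrow> real" where
  "symmetrize A t is = (1 / fact (card A)) * (\<Sum>\<sigma>\<in>{\<sigma>. \<sigma> permutes A}. t (perm_idx \<sigma> is))"

definition antisymmetrize :: "nat set \<Rightarrow> ('a list \<Rightarrow> real) \<Rightarrow> 'a list \<Rightarrow> real" where
  "antisymmetrize A t is =
     (1 / fact (card A)) * (\<Sum>\<sigma>\<in>{\<sigma>. \<sigma> permutes A}. of_int (sign \<sigma>) * t (perm_idx \<sigma> is))"

definition tensor_field :: "(real^'n::finite) set \<Rightarrow> nat \<Rightarrow> (real^'n \<Rightarrow> 'n list \<Rightarrow> real) \<Rightarrow> bool" where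
  "tensor_field U r T \<longleftrightarrow> (\<forall>is. length is = r \<longrightarrow> Cinf_on U (\<lambda>x. T x is))"

definition antisym_tensor_field :: "(real^'n::finite) set \<Rightarrow> nat \<Rightarrow> (real^'n \<Rightarrow> 'n list \<Rightarrow> real) \<Rightarrow> bool" where
  "antisym_tensor_field U r T \<longleftrightarrow> tensor_field U r T \<and>
     (\<forall>x\<in>U. \<forall>is. length is = r \<longrightarrow> T x is = antisymmetrize {0..<r} (T x) is)"

definition sym_tensor_field :: "(real^'n::finite) set \<Rightarrow> nat \<Rightarrow> (real^'n \<Rightarrow> 'n list \<Rightarrow> real) \<Rightarrow> bool" where
  "sym_tensor_field U r T \<longleftrightarrow> tensor_field U r T \<and>
     (\<forall>x\<in>U. \<forall>is. length is = r \<longrightarrow> T x is = symmetrize {0..<r} (T x) is)"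

text \<open>Antisymmetric affine tensor field: nabla_mu nabla_(nu f_rho1) rho2...rhop = 0,
i.e. symmetrization over positions 1 and 2 of nabla nabla f.\<close>
definition AAT :: "(real^'n::finite) set \<Rightarrow> (real^'n \<Rightarrow> real^'n^'n) \<Rightarrow> nat
                   \<Rightarrow> (real^'n \<Rightarrow> 'n list \<Rightarrow> real) \<Rightarrow> bool" where
  "AAT U G p f \<longleftrightarrow> antisym_tensor_field U p f \<and>
     (\<forall>x\<in>U. \<forall>is. length is = p + 2 \<longrightarrow> symmetrize {1..<3} (nabla G (nabla G f) x) is = 0)"

text \<open>Symmetric affine tensor field: nabla_mu nabla_(nu K_rho1...rhoq) = 0,
i.e. symmetrization over positions 1..q+1 of nabla nabla K.\<close>
definition SAT :: "(real^'n::finite) set \<Rightarrow> (real^'n \<Rightarrow> real^'n^'n) \<Rightarrow> nat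
                   \<Rightarrow> (real^'n \<Rightarrow> 'n list \<Rightarrow> real) \<Rightarrow> bool" where
  "SAT U G q K \<longleftrightarrow> sym_tensor_field U q K \<and>
     (\<forall>x\<in>U. \<forall>is. length is = q + 2 \<longrightarrow> symmetrize {1..<q+2} (nabla G (nabla G K) x) is = 0)"

definition contr :: "(real^'n::finite \<Rightarrow> real^'n^'n) \<Rightarrow> nat \<Rightarrow> (real^'n \<Rightarrow> 'n list \<Rightarrow> real)
                     \<Rightarrow> (real^'n \<Rightarrow> 'n list \<Rightarrow> real) \<Rightarrow> real^'n \<Rightarrow> 'n \<Rightarrow> 'n \<Rightarrow> real" where
  "contr G p f h x m n =
     (\<Sum>rs\<in>{rs. length rs = p - 1}. \<Sum>as\<in>{as. length as = p - 1}.
        f x (m # rs) * (\<Prod>k<p - 1. ginv G x (rs ! k) (as ! k)) * h x (n # as))"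

definition Kfield :: "(real^'n::finite \<Rightarrow> real^'n^'n) \<Rightarrow> nat \<Rightarrow> (real^'n \<Rightarrow> 'n list \<Rightarrow> real)
                     \<Rightarrow> (real^'n \<Rightarrow> 'n list \<Rightarrow> real) \<Rightarrow> real^'n \<Rightarrow> 'n list \<Rightarrow> real" where
  "Kfield G p f h x is =
     (if length is = 2 then (contr G p f h x (is ! 0) (is ! 1) + contr G p f h x (is ! 1) (is ! 0)) / 2
      else 0)"

end

theory Submission
  imports Defs
begin

lemma pd_has_derivative:
  assumes "(F has_derivative F') (at x)"
  shows "pd i F x = F' (axis i 1)"
proof -
  have l: "linear F'" using assms has_derivative_linear by blast
  have "((\<lambda>t. F (x + t *\<^sub>R axis i 1)) has_derivative (\<lambda>t. F' (t *\<^sub>R axis i 1))) (at 0)"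
    by (rule has_derivative_compose[where f="\<lambda>t. x + t *\<^sub>R axis i 1" and g=F, OF _ ])
       (auto intro!: derivative_eq_intros assms[simplified] )
  then have "((\<lambda>t. F (x + t *\<^sub>R axis i 1)) has_derivative (\<lambda>t. F' (axis i 1) * t)) (at 0)"
    by (simp add: linear.scaleR[OF l] mult.commute)
  then have "((\<lambda>t. F (x + t *\<^sub>R axis i 1)) has_field_derivative F' (axis i 1)) (at 0)"
    by (simp add: has_field_derivative_def)
  then show ?thesis unfolding pd_def by (rule DERIV_imp_deriv)
qed

lemma diff_hasD: "F differentiable (at x) \<Longrightarrow> (F has_derivative frechet_derivative F (at x)) (at x)"
  using frechet_derivative_works by blast

lemma pd_add:
  assumes "F differentiable (at x)" "G differentiable (at x)"
  shows "pd i (\<lambda>y. F y + G y) x = pd i F x + pd i G x"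
  using pd_has_derivative[OF has_derivative_add[OF diff_hasD[OF assms(1)] diff_hasD[OF assms(2)]]]
    pd_has_derivative[OF diff_hasD[OF assms(1)]] pd_has_derivative[OF diff_hasD[OF assms(2)]] by simp

lemma pd_diff:
  assumes "F differentiable (at x)" "G differentiable (at x)"
  shows "pd i (\<lambda>y. F y - G y) x = pd i F x - pd i G x"
  using pd_has_derivative[OF has_derivative_diff[OF diff_hasD[OF assms(1)] diff_hasD[OF assms(2)]]]
    pd_has_derivative[OF diff_hasD[OF assms(1)]] pd_has_derivative[OF diff_hasD[OF assms(2)]] by simp

lemma pd_mult:
  assumes "F differentiable (at x)" "G differentiable (at x)"
  shows "pd i (\<lambda>y. F y * G y) x = pd i F x * G x + F x * pd i G x"
  using pd_has_derivative[OF has_derivative_mult[OF diff_hasD[OF assms(1)] diff_hasD[OF assms(2)]]]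
    pd_has_derivative[OF diff_hasD[OF assms(1)]] pd_has_derivative[OF diff_hasD[OF assms(2)]]
  by (simp add: algebra_simps)

lemma pd_const: "pd i (\<lambda>y. c) x = 0"
proof -
  have "((\<lambda>y. c) has_derivative (\<lambda>h. 0)) (at x)" by simp
  from pd_has_derivative[OF this] show ?thesis by simp
qed

lemma pd_cmult:
  assumes "F differentiable (at x)"
  shows "pd i (\<lambda>y. c * F y) x = c * pd i F x"
  using pd_mult[OF differentiable_const assms, of i c] by (simp add: pd_const)

lemma pd_sum:
  assumes "finite A" "\<And>a. a \<in> A \<Longrightarrow> F a differentiable (at x)"
  shows "pd i (\<lambda>y. \<Sum>a\<in>A. F a y) x = (\<Sum>a\<in>A. pd i (F a) x)"
proof -
  have "((\<lambda>y. \<Sum>a\<in>A. F a y) has_derivative (\<lambda>h. \<Sum>a\<in>A. frechet_derivative (F a) (at x) h)) (at x)"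
    by (rule has_derivative_sum) (use assms diff_hasD in blast)
  from pd_has_derivative[OF this] show ?thesis
    using pd_has_derivative[OF diff_hasD[OF assms(2)]] by simp
qed

lemma pd_prod:
  assumes "finite A" "\<And>a. a \<in> A \<Longrightarrow> F a differentiable (at x)"
  shows "pd i (\<lambda>y. \<Prod>a\<in>A. F a y) x = (\<Sum>a\<in>A. pd i (F a) x * (\<Prod>b\<in>A - {a}. F b x))"
proof -
  have "((\<lambda>y. \<Prod>a\<in>A. F a y) has_derivative
     (\<lambda>h. \<Sum>a\<in>A. frechet_derivative (F a) (at x) h * (\<Prod>b\<in>A - {a}. F b x))) (at x)"
    by (rule has_derivative_prod) (use assms diff_hasD in blast)
  from pd_has_derivative[OF this] show ?thesis
    using pd_has_derivative[OF diff_hasD[OF assms(2)]] by simp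
qed

lemma pd_inverse:
  assumes "F differentiable (at x)" "F x \<noteq> 0"
  shows "pd i (\<lambda>y. inverse (F y)) x = - pd i F x * inverse (F x) * inverse (F x)"
  using pd_has_derivative[OF Deriv.has_derivative_inverse[OF assms(2) diff_hasD[OF assms(1)]]]
    pd_has_derivative[OF diff_hasD[OF assms(1)]] by (simp add: algebra_simps)

lemma pd_cong:
  assumes "open U" "x \<in> U" "\<And>y. y \<in> U \<Longrightarrow> F y = G y"
  shows "pd i F x = pd i G x"
proof -
  obtain e where e: "e > 0" "ball x e \<subseteq> U" using assms(1,2) open_contains_ball by blast
  have "\<forall>\<^sub>F t in nhds 0. F (x + t *\<^sub>R axis i 1) = G (x + t *\<^sub>R axis i 1)"
    unfolding eventually_nhds_metric
  proof (rule exI[of _ e], intro conjI allI impI)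
    show "e > 0" by (rule e(1))
    fix t :: real assume "dist t 0 < e"
    then have "x + t *\<^sub>R axis i 1 \<in> ball x e" by (simp add: dist_norm)
    then have "x + t *\<^sub>R axis i 1 \<in> U" using e by blast
    then show "F (x + t *\<^sub>R axis i 1) = G (x + t *\<^sub>R axis i 1)" by (rule assms(3))
  qed
  then have "deriv (\<lambda>t. F (x + t *\<^sub>R axis i 1)) 0 = deriv (\<lambda>t. G (x + t *\<^sub>R axis i 1)) 0"
    by (rule deriv_cong_ev) (rule refl)
  then show ?thesis unfolding pd_def .
qed

lemma iterpd_append: "iterpd (is @ js) F = iterpd is (iterpd js F)"
  by (induction "is") auto

lemma iterpd_cong:
  assumes "open U" "\<And>y. y \<in> U \<Longrightarrow> F y = G y" "x \<in> U"
  shows "iterpd is F x = iterpd is G x"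
  using assms(3)
proof (induction "is" arbitrary: x)
  case Nil then show ?case using assms by simp
next
  case (Cons i "is")
  have "pd i (iterpd is F) x = pd i (iterpd is G) x"
    by (rule pd_cong[OF assms(1) Cons.prems]) (rule Cons.IH)
  then show ?case by simp
qed

lemma diff_cong:
  assumes "open U" "x \<in> U" "\<And>y. y \<in> U \<Longrightarrow> F y = G y" "F differentiable (at x)"
  shows "G differentiable (at x)"
proof -
  from assms(4) obtain D where "(F has_derivative D) (at x)" unfolding differentiable_def by blast
  then have "(G has_derivative D) (at x)"
    by (rule has_derivative_transform_within_open[OF _ assms(1,2)]) (use assms(3) in auto)
  then show ?thesis unfolding differentiable_def by blast
qed


definition Ck :: "nat \<Rightarrow> (real^'n::finite) set \<Rightarrow> (real^'n \<Rightarrow> real) \<Rightarrow> bool" where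
  "Ck k U F \<longleftrightarrow> (\<forall>is. length is \<le> k \<longrightarrow> (\<forall>x\<in>U. iterpd is F differentiable (at x)))"

lemma Ck_D: "Ck k U F \<Longrightarrow> length is \<le> k \<Longrightarrow> x \<in> U \<Longrightarrow> iterpd is F differentiable (at x)"
  unfolding Ck_def by blast

lemma Ck_diff0: "Ck k U F \<Longrightarrow> x \<in> U \<Longrightarrow> F differentiable (at x)"
  using Ck_D[of k U F "[]"] by simp

lemma Ck_mono: "Ck k U F \<Longrightarrow> j \<le> k \<Longrightarrow> Ck j U F"
  unfolding Ck_def by auto

lemma Ck_pd:
  fixes U :: "(real^'n::finite) set"
  shows "Ck (Suc k) U F \<Longrightarrow> Ck k U (pd i F)"
  unfolding Ck_def
proof (intro allI impI ballI)
  fix "is" :: "'n list" and x assume a: "\<forall>is. length is \<le> Suc k \<longrightarrow> (\<forall>x\<in>U. iterpd is F differentiable at x)"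
    "length is \<le> k" "x \<in> U"
  have "iterpd (is @ [i]) F differentiable at x" using a by auto
  then show "iterpd is (pd i F) differentiable at x" by (simp add: iterpd_append)
qed

lemma Ck_cong:
  fixes U :: "(real^'n::finite) set"
  assumes "open U" "\<And>y. y \<in> U \<Longrightarrow> F y = G y" "Ck k U F"
  shows "Ck k U G"
  unfolding Ck_def
proof (intro allI impI ballI)
  fix "is" :: "'n list" and x assume a: "length is \<le> k" "x \<in> U"
  have d: "iterpd is F differentiable at x" using Ck_D[OF assms(3) a] .
  show "iterpd is G differentiable at x"
    by (rule diff_cong[OF assms(1) a(2) _ d]) (rule iterpd_cong[OF assms(1,2)])
qed

lemma iterpd_const_Cons: "iterpd (i # is) (\<lambda>y. c) = (\<lambda>y. 0)"
proof (induction "is" arbitrary: i)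
  case Nil then show ?case by (simp add: pd_const fun_eq_iff)
next
  case (Cons j "is")
  have "iterpd (i # j # is) (\<lambda>y. c) = pd i (iterpd (j # is) (\<lambda>y. c))" by (rule iterpd.simps(2))
  then show ?case by (simp only: Cons.IH) (simp add: pd_const fun_eq_iff)
qed

lemma iterpd_const: "iterpd is (\<lambda>y. c) = (if is = [] then (\<lambda>y. c) else (\<lambda>y. 0))"
  by (cases "is") (auto simp: iterpd_const_Cons simp del: iterpd.simps(2))

lemma Ck_const: "Ck k U (\<lambda>y. c)"
  unfolding Ck_def by (simp add: iterpd_const)

lemma iterpd_add:
  fixes U :: "(real^'n::finite) set"
  assumes "open U" "Ck k U F" "Ck k U G" "length is \<le> Suc k" "x \<in> U"
  shows "iterpd is (\<lambda>y. F y + G y) x = iterpd is F x + iterpd is G x"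
  using assms(4,5)
proof (induction "is" arbitrary: x)
  case Nil then show ?case by simp
next
  case (Cons i "is")
  have "iterpd (i # is) (\<lambda>y. F y + G y) x = pd i (\<lambda>y. iterpd is F y + iterpd is G y) x"
    unfolding iterpd.simps(2)
    by (rule pd_cong[OF assms(1) Cons.prems(2)]) (use Cons in simp)
  also have "\<dots> = iterpd (i # is) F x + iterpd (i # is) G x"
    using Cons.prems by (simp add: pd_add Ck_D[OF assms(2)] Ck_D[OF assms(3)])
  finally show ?case .
qed

lemma Ck_add:
  fixes U :: "(real^'n::finite) set"
  assumes "open U" "Ck k U F" "Ck k U G"
  shows "Ck k U (\<lambda>y. F y + G y)"
  unfolding Ck_def
proof (intro allI impI ballI)
  fix "is" :: "'n list" and x assume a: "length is \<le> k" "x \<in> U"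
  have d: "(\<lambda>y. iterpd is F y + iterpd is G y) differentiable at x"
    using Ck_D[OF assms(2) a] Ck_D[OF assms(3) a] by simp
  show "iterpd is (\<lambda>y. F y + G y) differentiable at x"
    by (rule diff_cong[OF assms(1) a(2) _ d]) (use iterpd_add[OF assms] a in auto)
qed

lemma Ck_mult:
  fixes U :: "(real^'n::finite) set"
  assumes "open U"
  shows "Ck k U F \<Longrightarrow> Ck k U G \<Longrightarrow> Ck k U (\<lambda>y. F y * G y)"
proof (induction k arbitrary: F G)
  case 0
  then show ?case unfolding Ck_def using Ck_diff0 by auto
next
  case (Suc k)
  show ?case unfolding Ck_def
  proof (intro allI impI ballI)
    fix "is" :: "'n list" and x assume a: "length is \<le> Suc k" "x \<in> U"
    show "iterpd is (\<lambda>y. F y * G y) differentiable at x"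
    proof (cases "is" rule: rev_cases)
      case Nil then show ?thesis using Ck_diff0[OF Suc.prems(1) a(2)] Ck_diff0[OF Suc.prems(2) a(2)] by simp
    next
      case (snoc js i)
      have H: "Ck k U (\<lambda>y. pd i F y * G y + F y * pd i G y)"
        by (rule Ck_add[OF assms Suc.IH[OF Ck_pd[OF Suc.prems(1)] Ck_mono[OF Suc.prems(2)]]
            Suc.IH[OF Ck_mono[OF Suc.prems(1)] Ck_pd[OF Suc.prems(2)]]]) auto
      have eq: "pd i (\<lambda>y. F y * G y) y = pd i F y * G y + F y * pd i G y" if "y \<in> U" for y
        using pd_mult Ck_diff0 Suc.prems that by blast
      have d: "iterpd js (\<lambda>y. pd i F y * G y + F y * pd i G y) differentiable at x"
        using Ck_D[OF H] a snoc by simp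
      have "iterpd js (pd i (\<lambda>y. F y * G y)) differentiable at x"
        by (rule diff_cong[OF assms a(2) _ d]) (rule iterpd_cong[OF assms], use eq in auto)
      then show ?thesis using snoc by (simp add: iterpd_append)
    qed
  qed
qed

lemma Ck_inverse:
  fixes U :: "(real^'n::finite) set"
  assumes "open U" "\<And>y. y \<in> U \<Longrightarrow> F y \<noteq> 0"
  shows "Ck k U F \<Longrightarrow> Ck k U (\<lambda>y. inverse (F y))"
proof (induction k)
  case 0
  then show ?case unfolding Ck_def using Ck_diff0 assms(2) by auto
next
  case (Suc k)
  show ?case unfolding Ck_def
  proof (intro allI impI ballI)
    fix "is" :: "'n list" and x assume a: "length is \<le> Suc k" "x \<in> U"
    show "iterpd is (\<lambda>y. inverse (F y)) differentiable at x"
    proof (cases "is" rule: rev_cases)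
      case Nil then show ?thesis using Ck_diff0[OF Suc.prems(1) a(2)] assms(2)[OF a(2)] by simp
    next
      case (snoc js i)
      have m: "Ck k U (\<lambda>y. - pd i F y)"
        using Ck_mult[OF assms(1) Ck_const[of k U "-1"] Ck_pd[OF Suc.prems, of i]] by simp
      have iv: "Ck k U (\<lambda>y. inverse (F y))" using Suc.IH Ck_mono[OF Suc.prems] by simp
      have H: "Ck k U (\<lambda>y. (- pd i F y * inverse (F y)) * inverse (F y))"
        by (rule Ck_mult[OF assms(1) Ck_mult[OF assms(1) m iv] iv])
      have eq: "pd i (\<lambda>y. inverse (F y)) y = (- pd i F y * inverse (F y)) * inverse (F y)" if "y \<in> U" for y
        using pd_inverse Ck_diff0 Suc.prems that assms(2) by blast
      have d: "iterpd js (\<lambda>y. (- pd i F y * inverse (F y)) * inverse (F y)) differentiable at x"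
        using Ck_D[OF H] a snoc by simp
      have "iterpd js (pd i (\<lambda>y. inverse (F y))) differentiable at x"
        by (rule diff_cong[OF assms(1) a(2) _ d]) (rule iterpd_cong[OF assms(1)], use eq in auto)
      then show ?thesis using snoc by (simp add: iterpd_append)
    qed
  qed
qed

definition smooth :: "(real^'n::finite) set \<Rightarrow> (real^'n \<Rightarrow> real) \<Rightarrow> bool" where
  "smooth U F \<longleftrightarrow> (\<forall>k. Ck k U F)"

context
  fixes U :: "(real^'n::finite) set"
  assumes U: "open U"
begin

lemma smooth_diffble: "smooth U F \<Longrightarrow> x \<in> U \<Longrightarrow> F differentiable (at x)"
  unfolding smooth_def using Ck_diff0 by blast

lemma smooth_const: "smooth U (\<lambda>y. c)"
  unfolding smooth_def using Ck_const by blast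

lemma smooth_add: "smooth U F \<Longrightarrow> smooth U G \<Longrightarrow> smooth U (\<lambda>y. F y + G y)"
  unfolding smooth_def using Ck_add[OF U] by blast

lemma smooth_mult: "smooth U F \<Longrightarrow> smooth U G \<Longrightarrow> smooth U (\<lambda>y. F y * G y)"
  unfolding smooth_def using Ck_mult[OF U] by blast

lemma smooth_inverse: "smooth U F \<Longrightarrow> (\<And>y. y \<in> U \<Longrightarrow> F y \<noteq> 0) \<Longrightarrow> smooth U (\<lambda>y. inverse (F y))"
  unfolding smooth_def using Ck_inverse[OF U] by blast

lemma smooth_pd: "smooth U F \<Longrightarrow> smooth U (pd i F)"
  unfolding smooth_def using Ck_pd by blast

lemma smooth_cong: "smooth U F \<Longrightarrow> (\<And>y. y \<in> U \<Longrightarrow> F y = G y) \<Longrightarrow> smooth U G"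
  unfolding smooth_def using Ck_cong[OF U] by blast

lemma smooth_minus: "smooth U F \<Longrightarrow> smooth U (\<lambda>y. - F y)"
  using smooth_mult[OF smooth_const[of "-1"]] by simp

lemma smooth_diff: "smooth U F \<Longrightarrow> smooth U G \<Longrightarrow> smooth U (\<lambda>y. F y - G y)"
  using smooth_add[OF _ smooth_minus] by simp

lemma smooth_divide: "smooth U F \<Longrightarrow> smooth U G \<Longrightarrow> (\<And>y. y \<in> U \<Longrightarrow> G y \<noteq> 0) \<Longrightarrow> smooth U (\<lambda>y. F y / G y)"
  using smooth_mult[OF _ smooth_inverse] by (simp add: divide_inverse)

lemma smooth_sum: "finite A \<Longrightarrow> (\<And>a. a \<in> A \<Longrightarrow> smooth U (F a)) \<Longrightarrow> smooth U (\<lambda>y. \<Sum>a\<in>A. F a y)"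
proof (induction A rule: finite_induct)
  case empty then show ?case by (simp add: smooth_const)
next
  case (insert a A) then show ?case by (simp add: smooth_add)
qed

lemma smooth_prod: "finite A \<Longrightarrow> (\<And>a. a \<in> A \<Longrightarrow> smooth U (F a)) \<Longrightarrow> smooth U (\<lambda>y. \<Prod>a\<in>A. F a y)"
proof (induction A rule: finite_induct)
  case empty then show ?case by (simp add: smooth_const)
next
  case (insert a A) then show ?case by (simp add: smooth_mult)
qed

lemma Cinf_on_smooth: "Cinf_on U F \<longleftrightarrow> smooth U F"
  unfolding Cinf_on_def smooth_def Ck_def using differentiable_on_eq_differentiable_at[OF U] by blast

lemma smooth_det: "(\<And>i j. smooth U (\<lambda>y. M y $ i $ j)) \<Longrightarrow> smooth U (\<lambda>y. det (M y))"
  unfolding det_def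
  by (intro smooth_sum smooth_mult smooth_const smooth_prod) auto

end

lemma matrix_inv_right: "invertible A \<Longrightarrow> A ** matrix_inv A = mat 1"
  unfolding matrix_inv_def invertible_def by (rule someI2_ex) auto

lemma matrix_inv_left: "invertible A \<Longrightarrow> matrix_inv A ** A = mat 1"
  unfolding matrix_inv_def invertible_def by (rule someI2_ex) auto

lemma sym_inv_sym:
  fixes A :: "real^'n::finite^'n"
  assumes "transpose A = A" "invertible A"
  shows "transpose (matrix_inv A) = matrix_inv A"
proof -
  let ?B = "matrix_inv A"
  have "transpose ?B ** A = mat 1"
    using arg_cong[OF matrix_inv_right[OF assms(2)], of transpose] assms(1)
    by (simp add: matrix_transpose_mul transpose_mat)
  note h = this
  have "transpose ?B = transpose ?B ** (A ** ?B)"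
    by (simp add: matrix_inv_right[OF assms(2)] matrix_mul_rid)
  also have "\<dots> = (transpose ?B ** A) ** ?B" by (simp add: matrix_mul_assoc)
  also have "\<dots> = ?B" using h by (simp add: matrix_mul_lid)
  finally show ?thesis .
qed

context
  fixes U :: "(real^'n::finite) set" and G :: "real^'n \<Rightarrow> real^'n^'n"
  assumes U: "open U" and mf: "metric_field U G"
begin

lemma transpose_comp: "transpose A $ i $ j = A $ j $ i"
  by (simp add: transpose_def)

lemma G_sym: "x \<in> U \<Longrightarrow> G x $ a $ b = G x $ b $ a"
  using mf unfolding metric_field_def by (metis transpose_comp)

lemma G_inv: "x \<in> U \<Longrightarrow> invertible (G x)"
  using mf unfolding metric_field_def by blast

lemma ginv_sym: "x \<in> U \<Longrightarrow> ginv G x a b = ginv G x b a"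
  unfolding ginv_def using sym_inv_sym[of "G x"] mf unfolding metric_field_def
  by (metis transpose_comp)

lemma G_ginv: "x \<in> U \<Longrightarrow> (\<Sum>c\<in>UNIV. G x $ a $ c * ginv G x c b) = (if a = b then 1 else 0)"
  using arg_cong[where f="\<lambda>M. M $ a $ b", OF matrix_inv_right[OF G_inv[of x]]]
  unfolding ginv_def by (simp add: matrix_matrix_mult_def mat_def)

lemma ginv_G: "x \<in> U \<Longrightarrow> (\<Sum>c\<in>UNIV. ginv G x a c * G x $ c $ b) = (if a = b then 1 else 0)"
  using arg_cong[where f="\<lambda>M. M $ a $ b", OF matrix_inv_left[OF G_inv[of x]]]
  unfolding ginv_def by (simp add: matrix_matrix_mult_def mat_def)

lemma smooth_G: "smooth U (\<lambda>y. G y $ i $ j)"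
  using mf Cinf_on_smooth[OF U] unfolding metric_field_def by blast

lemma ginv_cramer:
  assumes "x \<in> U"
  shows "ginv G x k j = det (\<chi> i j'. if j' = k then (if i = j then 1 else 0) else G x $ i $ j') / det (G x)"
proof -
  have d0: "det (G x) \<noteq> 0" using G_inv[OF assms] invertible_det_nz by blast
  let ?b = "(\<chi> i. if i = j then 1 else 0) :: real^'n"
  let ?c = "(\<chi> k. matrix_inv (G x) $ k $ j) :: real^'n"
  have "G x *v ?c = ?b"
    using arg_cong[where f="\<lambda>M. \<chi> i. M $ i $ j", OF matrix_inv_right[OF G_inv[OF assms]]]
    by (simp add: matrix_matrix_mult_def mat_def matrix_vector_mult_def)
  then have "?c = (\<chi> k. det(\<chi> i j'. if j'=k then ?b$i else G x$i$j') / det (G x))"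
    using cramer[OF d0] by blast
  then have "?c $ k = det(\<chi> i j'. if j'=k then ?b$i else G x$i$j') / det (G x)" by simp
  moreover have "(\<chi> i j'. if j'=k then ?b$i else G x$i$j') = (\<chi> i j'. if j' = k then (if i = j then 1 else 0) else G x $ i $ j')"
    by (simp add: vec_eq_iff)
  ultimately show ?thesis unfolding ginv_def by simp
qed

lemma smooth_ginv: "smooth U (\<lambda>y. ginv G y k j)"
proof (rule smooth_cong[OF U])
  show "smooth U (\<lambda>y. det (\<chi> i j'. if j' = k then (if i = j then 1 else 0) else G y $ i $ j') / det (G y))"
  proof (rule smooth_divide[OF U])
    show "smooth U (\<lambda>y. det (\<chi> i j'. if j' = k then (if i = j then 1 else 0) else G y $ i $ j'))"
    proof (rule smooth_det[OF U])
      fix i ja show "smooth U (\<lambda>y. (\<chi> i j'. if j' = k then (if i = j then 1 else 0) else G y $ i $ j') $ i $ ja)"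
        by (cases "ja = k") (simp_all add: smooth_const[OF U] smooth_G)
    qed
    show "smooth U (\<lambda>y. det (G y))" by (rule smooth_det[OF U, of G]) (rule smooth_G)
    show "\<And>y. y \<in> U \<Longrightarrow> det (G y) \<noteq> 0" using G_inv invertible_det_nz by blast
  qed
qed (simp add: ginv_cramer)

end

context
  fixes U :: "(real^'n::finite) set" and G :: "real^'n \<Rightarrow> real^'n^'n"
  assumes U: "open U" and mf: "metric_field U G"
begin

lemma dG_sym: "x \<in> U \<Longrightarrow> pd s (\<lambda>y. G y $ a $ b) x = pd s (\<lambda>y. G y $ b $ a) x"
  by (rule pd_cong[OF U]) (auto intro: G_sym[OF U mf])

lemma diff_G: "x \<in> U \<Longrightarrow> (\<lambda>y. G y $ a $ b) differentiable (at x)"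
  by (rule smooth_diffble[OF U smooth_G[OF U mf]])

lemma diff_ginv: "x \<in> U \<Longrightarrow> (\<lambda>y. ginv G y a b) differentiable (at x)"
  by (rule smooth_diffble[OF U smooth_ginv[OF U mf]])

lemma smooth_christoffel: "smooth U (\<lambda>y. christoffel G y l m n)"
  unfolding christoffel_def
  by (intro smooth_mult[OF U] smooth_const[OF U] smooth_sum[OF U] smooth_add[OF U] smooth_diff[OF U]
      smooth_ginv[OF U mf] smooth_pd[OF U] smooth_G[OF U mf] finite)

lemma kron_sum: "(\<Sum>c\<in>UNIV. (if (d::'a::finite) = c then 1 else 0) * F c) = (F d :: real)"
proof -
  have "(\<Sum>c\<in>UNIV. (if d = c then 1 else 0) * F c) = (\<Sum>c\<in>UNIV. if c = d then F c else 0)"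
    by (rule sum.cong) auto
  then show ?thesis by simp
qed

lemma pd_ginv:
  assumes x: "x \<in> U"
  shows "pd s (\<lambda>y. ginv G y d b) x =
    - (\<Sum>a\<in>UNIV. \<Sum>c\<in>UNIV. ginv G x d a * pd s (\<lambda>y. G y $ a $ c) x * ginv G x c b)"
proof -
  have h1: "(\<Sum>c\<in>UNIV. pd s (\<lambda>y. G y $ a $ c) x * ginv G x c b + G x $ a $ c * pd s (\<lambda>y. ginv G y c b) x) = 0" for a
  proof -
    have "pd s (\<lambda>y. \<Sum>c\<in>UNIV. G y $ a $ c * ginv G y c b) x = pd s (\<lambda>y. if a = b then 1 else 0) x"
      by (rule pd_cong[OF U x]) (rule G_ginv[OF U mf])
    also have "\<dots> = 0" by (rule pd_const)
    finally have "pd s (\<lambda>y. \<Sum>c\<in>UNIV. G y $ a $ c * ginv G y c b) x = 0" .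
    moreover have "pd s (\<lambda>y. \<Sum>c\<in>UNIV. G y $ a $ c * ginv G y c b) x = (\<Sum>c\<in>UNIV. pd s (\<lambda>y. G y $ a $ c * ginv G y c b) x)"
      by (rule pd_sum) (auto intro!: differentiable_mult diff_G diff_ginv x)
    moreover have "pd s (\<lambda>y. G y $ a $ c * ginv G y c b) x = pd s (\<lambda>y. G y $ a $ c) x * ginv G x c b + G x $ a $ c * pd s (\<lambda>y. ginv G y c b) x" for c
      by (rule pd_mult) (auto intro!: diff_G diff_ginv x)
    ultimately show ?thesis by simp
  qed
  then have h2: "(\<Sum>c\<in>UNIV. G x $ a $ c * pd s (\<lambda>y. ginv G y c b) x) = - (\<Sum>c\<in>UNIV. pd s (\<lambda>y. G y $ a $ c) x * ginv G x c b)" for a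
    by (simp add: sum.distrib eq_neg_iff_add_eq_0 add.commute)
  have "pd s (\<lambda>y. ginv G y d b) x = (\<Sum>c\<in>UNIV. (if d = c then 1 else 0) * pd s (\<lambda>y. ginv G y c b) x)"
    by (rule kron_sum[symmetric])
  also have "\<dots> = (\<Sum>c\<in>UNIV. (\<Sum>a\<in>UNIV. ginv G x d a * G x $ a $ c) * pd s (\<lambda>y. ginv G y c b) x)"
    using ginv_G[OF U mf x] by simp
  also have "\<dots> = (\<Sum>a\<in>UNIV. ginv G x d a * (\<Sum>c\<in>UNIV. G x $ a $ c * pd s (\<lambda>y. ginv G y c b) x))"
    by (simp add: sum_distrib_left sum_distrib_right mult.assoc) (rule sum.swap)
  also have "\<dots> = (\<Sum>a\<in>UNIV. ginv G x d a * (- (\<Sum>c\<in>UNIV. pd s (\<lambda>y. G y $ a $ c) x * ginv G x c b)))"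
    using h2 by simp
  also have "\<dots> = - (\<Sum>a\<in>UNIV. \<Sum>c\<in>UNIV. ginv G x d a * pd s (\<lambda>y. G y $ a $ c) x * ginv G x c b)"
    by (simp add: sum_distrib_left sum_negf mult.assoc)
  finally show ?thesis .
qed

lemma metric_compat:
  assumes x: "x \<in> U"
  shows "pd s (\<lambda>y. ginv G y a b) x =
    - (\<Sum>l\<in>UNIV. christoffel G x a s l * ginv G x l b) - (\<Sum>l\<in>UNIV. christoffel G x b s l * ginv G x a l)"
proof -
  define D where "D = (\<lambda>s a c. pd s (\<lambda>y. G y $ a $ c) x)"
  define gi where "gi = (\<lambda>a b. ginv G x a b)"
  have Ds: "D s a c = D s c a" for s a c unfolding D_def by (rule dG_sym[OF x])
  have gs: "gi a c = gi c a" for a c unfolding gi_def by (rule ginv_sym[OF U mf x])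
  have Gam: "christoffel G x l m n = 1/2 * (\<Sum>k\<in>UNIV. gi l k * (D m k n + D n k m - D k m n))" for l m n
    unfolding christoffel_def D_def gi_def ..
  have e1: "(\<Sum>l\<in>UNIV. christoffel G x a s l * gi l b) =
      (\<Sum>k\<in>UNIV. \<Sum>l\<in>UNIV. 1/2 * gi a k * (D s k l + D l k s - D k s l) * gi l b)"
    unfolding Gam by (subst sum.swap) (simp add: sum_distrib_left sum_distrib_right mult.assoc)
  have e2: "(\<Sum>l\<in>UNIV. christoffel G x b s l * gi a l) =
      (\<Sum>k\<in>UNIV. \<Sum>l\<in>UNIV. 1/2 * gi a k * (D s k l + D k s l - D l k s) * gi l b)"
  proof -
    have "(\<Sum>l\<in>UNIV. christoffel G x b s l * gi a l) =
      (\<Sum>l\<in>UNIV. \<Sum>k\<in>UNIV. 1/2 * gi b k * (D s k l + D l k s - D k s l) * gi a l)"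
      unfolding Gam by (simp add: sum_distrib_left sum_distrib_right mult.assoc)
    also have "\<dots> = (\<Sum>l\<in>UNIV. \<Sum>k\<in>UNIV. 1/2 * gi a l * (D s l k + D l s k - D k l s) * gi k b)"
    proof (intro sum.cong refl)
      fix l k
      show "1/2 * gi b k * (D s k l + D l k s - D k s l) * gi a l = 1/2 * gi a l * (D s l k + D l s k - D k l s) * gi k b"
        by (simp add: Ds[of s k l] Ds[of l k s] Ds[of k s l] gs[of b k])
    qed
    finally show ?thesis .
  qed
  have "pd s (\<lambda>y. ginv G y a b) x = - (\<Sum>k\<in>UNIV. \<Sum>l\<in>UNIV. gi a k * D s k l * gi l b)"
    unfolding pd_ginv[OF x] D_def gi_def ..
  also have "\<dots> = - ((\<Sum>k\<in>UNIV. \<Sum>l\<in>UNIV. 1/2 * gi a k * (D s k l + D l k s - D k s l) * gi l b)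
       + (\<Sum>k\<in>UNIV. \<Sum>l\<in>UNIV. 1/2 * gi a k * (D s k l + D k s l - D l k s) * gi l b))"
    by (simp add: sum.distrib[symmetric] algebra_simps)
  finally show ?thesis using e1 e2 unfolding gi_def by linarith
qed

end

definition LS :: "nat \<Rightarrow> 'n list set" where "LS P = {rs. length rs = P}"

definition gp :: "(real^'n::finite \<Rightarrow> real^'n^'n) \<Rightarrow> real^'n \<Rightarrow> nat \<Rightarrow> 'n list \<Rightarrow> 'n list \<Rightarrow> real" where
  "gp G y P rs as = (\<Prod>k<P. ginv G y (rs!k) (as!k))"

definition Cc :: "(real^'n::finite \<Rightarrow> real^'n^'n) \<Rightarrow> nat \<Rightarrow> (real^'n \<Rightarrow> 'n list \<Rightarrow> real)
    \<Rightarrow> (real^'n \<Rightarrow> 'n list \<Rightarrow> real) \<Rightarrow> real^'n \<Rightarrow> 'n list \<Rightarrow> real" where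
  "Cc G P T h y L = (\<Sum>rs\<in>LS P. \<Sum>as\<in>LS P. T y (butlast L @ rs) * gp G y P rs as * h y (last L # as))"

lemma finite_LS: "finite (LS P :: ('n::finite) list set)"
proof -
  have "LS P = {xs. set xs \<subseteq> (UNIV::'n set) \<and> length xs = P}" unfolding LS_def by auto
  then show ?thesis using finite_lists_length_eq[of "UNIV::'n set" P] by simp
qed

lemma reindex_upd:
  fixes F :: "('n::finite) list \<Rightarrow> 'n \<Rightarrow> real"
  assumes "j < P"
  shows "(\<Sum>rs\<in>LS P. \<Sum>l\<in>UNIV. F rs l) = (\<Sum>rs\<in>LS P. \<Sum>l\<in>UNIV. F (rs[j:=l]) (rs!j))"
proof -
  have "(\<Sum>rs\<in>LS P. \<Sum>l\<in>UNIV. F rs l) = (\<Sum>(rs,l)\<in>LS P \<times> UNIV. F rs l)"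
    by (rule sum.cartesian_product)
  also have "\<dots> = (\<Sum>(rs,l)\<in>LS P \<times> UNIV. F (rs[j:=l]) (rs!j))"
    by (rule sum.reindex_bij_witness[where i="\<lambda>(rs,l). (rs[j:=l], rs!j)" and j="\<lambda>(rs,l). (rs[j:=l], rs!j)"])
       (use assms in \<open>auto simp: LS_def\<close>)
  also have "\<dots> = (\<Sum>rs\<in>LS P. \<Sum>l\<in>UNIV. F (rs[j:=l]) (rs!j))"
    by (rule sum.cartesian_product[symmetric])
  finally show ?thesis .
qed

lemma swap3: "(\<Sum>a\<in>A. \<Sum>b\<in>B. \<Sum>c\<in>C. f a b c) = (\<Sum>c\<in>C. \<Sum>a\<in>A. \<Sum>b\<in>B. (f a b c :: real))"
proof -
  have "(\<Sum>a\<in>A. \<Sum>b\<in>B. \<Sum>c\<in>C. f a b c) = (\<Sum>a\<in>A. \<Sum>c\<in>C. \<Sum>b\<in>B. f a b c)"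
    by (rule sum.cong[OF refl]) (rule sum.swap)
  also have "\<dots> = (\<Sum>c\<in>C. \<Sum>a\<in>A. \<Sum>b\<in>B. f a b c)" by (rule sum.swap)
  finally show ?thesis .
qed

lemma swap22: "(\<Sum>a\<in>A. \<Sum>b\<in>B. \<Sum>c\<in>C. \<Sum>d\<in>D. f a b c d) = (\<Sum>c\<in>C. \<Sum>d\<in>D. \<Sum>a\<in>A. \<Sum>b\<in>B. (f a b c d :: real))"
proof -
  have "(\<Sum>a\<in>A. \<Sum>b\<in>B. \<Sum>c\<in>C. \<Sum>d\<in>D. f a b c d) = (\<Sum>c\<in>C. \<Sum>a\<in>A. \<Sum>b\<in>B. \<Sum>d\<in>D. f a b c d)"
    by (rule swap3)
  also have "\<dots> = (\<Sum>c\<in>C. \<Sum>d\<in>D. \<Sum>a\<in>A. \<Sum>b\<in>B. f a b c d)"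
    by (rule sum.cong[OF refl]) (rule swap3)
  finally show ?thesis .
qed

lemma sum_split_add: "(\<Sum>k<q+(P::nat). f k) = (\<Sum>k<q. f k) + (\<Sum>j<P. f (q + j) :: real)"
  by (induction P) auto

lemma pd_mult3:
  assumes "A differentiable (at x)" "B differentiable (at x)" "C differentiable (at x)"
  shows "pd i (\<lambda>y. A y * B y * C y) x = pd i A x * B x * C x + A x * pd i B x * C x + A x * B x * pd i C x"
  using pd_mult[OF differentiable_mult[OF assms(1,2)] assms(3)] pd_mult[OF assms(1,2)]
  by (simp add: algebra_simps)

lemma gp_upd1:
  assumes "j < P" "length rs = P"
  shows "gp G x P (rs[j:=l]) as = ginv G x l (as!j) * (\<Prod>k\<in>{..<P}-{j}. ginv G x (rs!k) (as!k))"
proof -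
  have "gp G x P (rs[j:=l]) as = ginv G x (rs[j:=l]!j) (as!j) * (\<Prod>k\<in>{..<P}-{j}. ginv G x (rs[j:=l]!k) (as!k))"
    unfolding gp_def using assms by (subst prod.remove[of _ j]) auto
  also have "(\<Prod>k\<in>{..<P}-{j}. ginv G x (rs[j:=l]!k) (as!k)) = (\<Prod>k\<in>{..<P}-{j}. ginv G x (rs!k) (as!k))"
    by (rule prod.cong) auto
  finally show ?thesis using assms by simp
qed

lemma gp_upd2:
  assumes "j < P" "length as = P"
  shows "gp G x P rs (as[j:=l]) = ginv G x (rs!j) l * (\<Prod>k\<in>{..<P}-{j}. ginv G x (rs!k) (as!k))"
proof -
  have "gp G x P rs (as[j:=l]) = ginv G x (rs!j) (as[j:=l]!j) * (\<Prod>k\<in>{..<P}-{j}. ginv G x (rs!k) (as[j:=l]!k))"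
    unfolding gp_def using assms by (subst prod.remove[of _ j]) auto
  also have "(\<Prod>k\<in>{..<P}-{j}. ginv G x (rs!k) (as[j:=l]!k)) = (\<Prod>k\<in>{..<P}-{j}. ginv G x (rs!k) (as!k))"
    by (rule prod.cong) auto
  finally show ?thesis using assms by simp
qed

context
  fixes U :: "(real^'n::finite) set" and G :: "real^'n \<Rightarrow> real^'n^'n"
  assumes U: "open U" and mf: "metric_field U G"
begin

lemma smooth_gp: "smooth U (\<lambda>y. gp G y P rs as)"
  unfolding gp_def by (intro smooth_prod[OF U] smooth_ginv[OF U mf] finite_lessThan)

lemma pd_gp:
  assumes x: "x \<in> U" and l: "length rs = P" "length as = P"
  shows "pd s (\<lambda>y. gp G y P rs as) x =
    (\<Sum>j<P. \<Sum>l\<in>UNIV. - (christoffel G x (rs!j) s l * gp G x P (rs[j:=l]) as)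
                       - christoffel G x (as!j) s l * gp G x P rs (as[j:=l]))"
proof -
  have "pd s (\<lambda>y. gp G y P rs as) x =
     (\<Sum>j<P. pd s (\<lambda>y. ginv G y (rs!j) (as!j)) x * (\<Prod>k\<in>{..<P}-{j}. ginv G x (rs!k) (as!k)))"
    unfolding gp_def by (rule pd_prod) (auto intro: diff_ginv[OF U mf x])
  also have "\<dots> = (\<Sum>j<P. \<Sum>l\<in>UNIV. - (christoffel G x (rs!j) s l * gp G x P (rs[j:=l]) as)
                       - christoffel G x (as!j) s l * gp G x P rs (as[j:=l]))"
  proof (rule sum.cong[OF refl])
    fix j assume j: "j \<in> {..<P}"
    show "pd s (\<lambda>y. ginv G y (rs!j) (as!j)) x * (\<Prod>k\<in>{..<P}-{j}. ginv G x (rs!k) (as!k)) =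
       (\<Sum>l\<in>UNIV. - (christoffel G x (rs!j) s l * gp G x P (rs[j:=l]) as)
                       - christoffel G x (as!j) s l * gp G x P rs (as[j:=l]))"
      unfolding metric_compat[OF U mf x]
      using j l by (simp add: gp_upd1 gp_upd2 sum_distrib_left sum_distrib_right sum_subtractf sum_negf sum.distrib algebra_simps)
  qed
  finally show ?thesis .
qed

end

context
  fixes U :: "(real^'n::finite) set" and G :: "real^'n \<Rightarrow> real^'n^'n"
  assumes U: "open U" and mf: "metric_field U G"
begin

lemma nabla_Cc:
  fixes T h :: "real^'n \<Rightarrow> 'n list \<Rightarrow> real"
  assumes x: "x \<in> U" and L: "L \<noteq> []"
    and Td: "\<And>is. length is = length L - 1 + P \<Longrightarrow> (\<lambda>y. T y is) differentiable (at x)"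
    and hd: "\<And>is. length is = Suc P \<Longrightarrow> (\<lambda>y. h y is) differentiable (at x)"
    and hp: "\<And>is. length is = Suc (Suc P) \<Longrightarrow> nabla G h x is = 0"
  shows "nabla G (Cc G P T h) x (s # L) = Cc G P (nabla G T) h x (s # L)"
proof -
  define q where "q = length L - 1"
  define bL where "bL = butlast L"
  define n where "n = last L"
  have Leq: "L = bL @ [n]" unfolding bL_def n_def using L by simp
  have lbL: "length bL = q" unfolding bL_def q_def by simp
  have lL: "length L = Suc q" unfolding q_def using L by (cases L) auto
  let ?C = "christoffel G x"
  define Tt where "Tt = (\<lambda>rs. T x (bL @ rs))"
  define g where "g = (\<lambda>rs as. gp G x P rs as)"
  define hh where "hh = (\<lambda>as. h x (n # as))"
  define N where "N = (\<lambda>rs. nabla G T x (s # bL @ rs))"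
  define A2 where "A2 = (\<lambda>rs. \<Sum>k<q. \<Sum>l\<in>UNIV. ?C l s (L!k) * T x (bL[k:=l] @ rs))"
  define A3 where "A3 = (\<lambda>rs. \<Sum>j<P. \<Sum>l\<in>UNIV. ?C l s (rs!j) * T x (bL @ rs[j:=l]))"
  define PG1 where "PG1 = (\<lambda>rs as. \<Sum>j<P. \<Sum>l\<in>UNIV. - (?C (rs!j) s l * g (rs[j:=l]) as))"
  define PG2 where "PG2 = (\<lambda>rs as. \<Sum>j<P. \<Sum>l\<in>UNIV. - (?C (as!j) s l * g rs (as[j:=l])))"
  define H5 where "H5 = (\<lambda>as. \<Sum>l\<in>UNIV. ?C l s n * h x (l # as))"
  define H6 where "H6 = (\<lambda>as. \<Sum>j<P. \<Sum>l\<in>UNIV. ?C l s (as!j) * h x (n # as[j:=l]))"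

  have dT: "(\<lambda>y. T y (bL @ rs)) differentiable (at x)" if "rs \<in> LS P" for rs
    using that lbL by (intro Td) (auto simp: LS_def q_def)
  have dh: "(\<lambda>y. h y (n # as)) differentiable (at x)" if "as \<in> LS P" for as
    using that by (intro hd) (auto simp: LS_def)
  have dg: "(\<lambda>y. gp G y P rs as) differentiable (at x)" for rs as
    by (rule smooth_diffble[OF U smooth_gp[OF U mf] x])

  have pdT: "pd s (\<lambda>y. T y (bL @ rs)) x = N rs + A2 rs + A3 rs" if "rs \<in> LS P" for rs
  proof -
    have lr: "length rs = P" using that by (simp add: LS_def)
    have "N rs = pd s (\<lambda>y. T y (bL @ rs)) x -
        (\<Sum>k<q+P. \<Sum>l\<in>UNIV. ?C l s ((bL @ rs)!k) * T x ((bL @ rs)[k:=l]))"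
      unfolding N_def using lbL lr by simp
    also have "(\<Sum>k<q+P. \<Sum>l\<in>UNIV. ?C l s ((bL @ rs)!k) * T x ((bL @ rs)[k:=l])) = A2 rs + A3 rs"
      unfolding sum_split_add A2_def A3_def
    proof (intro arg_cong2[where f="(+)"] sum.cong refl)
      fix k l assume k: "k \<in> {..<q}"
      show "?C l s ((bL @ rs)!k) * T x ((bL @ rs)[k:=l]) = ?C l s (L!k) * T x (bL[k:=l] @ rs)"
        using k lbL by (simp add: Leq nth_append list_update_append1)
    next
      fix j l assume j: "j \<in> {..<P}"
      show "?C l s ((bL @ rs)!(q+j)) * T x ((bL @ rs)[q+j:=l]) = ?C l s (rs!j) * T x (bL @ rs[j:=l])"
        using j lbL by (simp add: nth_append list_update_append)
    qed
    finally show ?thesis by simp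
  qed

  have pdh: "pd s (\<lambda>y. h y (n # as)) x = H5 as + H6 as" if "as \<in> LS P" for as
  proof -
    have la: "length as = P" using that by (simp add: LS_def)
    have "nabla G h x (s # n # as) = pd s (\<lambda>y. h y (n # as)) x -
       (\<Sum>k<Suc P. \<Sum>l\<in>UNIV. ?C l s ((n # as)!k) * h x ((n # as)[k:=l]))"
      using la by simp
    also have "(\<Sum>k<Suc P. \<Sum>l\<in>UNIV. ?C l s ((n # as)!k) * h x ((n # as)[k:=l])) = H5 as + H6 as"
      unfolding sum.lessThan_Suc_shift H5_def H6_def by simp
    finally show ?thesis using hp[of "s # n # as"] la by simp
  qed

  have pdg: "pd s (\<lambda>y. gp G y P rs as) x = PG1 rs as + PG2 rs as" if "rs \<in> LS P" "as \<in> LS P" for rs as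
    using pd_gp[OF U mf x, of rs P as] that by (simp add: LS_def PG1_def PG2_def g_def sum_subtractf sum.distrib sum_negf)

  have pdC: "pd s (\<lambda>y. Cc G P T h y L) x =
     (\<Sum>rs\<in>LS P. \<Sum>as\<in>LS P. (N rs + A2 rs + A3 rs) * g rs as * hh as
        + Tt rs * (PG1 rs as + PG2 rs as) * hh as + Tt rs * g rs as * (H5 as + H6 as))"
  proof -
    have "pd s (\<lambda>y. Cc G P T h y L) x =
      pd s (\<lambda>y. \<Sum>rs\<in>LS P. \<Sum>as\<in>LS P. T y (bL @ rs) * gp G y P rs as * h y (n # as)) x"
      unfolding Cc_def bL_def n_def ..
    also have "\<dots> = (\<Sum>rs\<in>LS P. pd s (\<lambda>y. \<Sum>as\<in>LS P. T y (bL @ rs) * gp G y P rs as * h y (n # as)) x)"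
      by (rule pd_sum[OF finite_LS]) (intro differentiable_sum[OF finite_LS] ballI differentiable_mult dT dg dh; assumption)
    also have "\<dots> = (\<Sum>rs\<in>LS P. \<Sum>as\<in>LS P. pd s (\<lambda>y. T y (bL @ rs) * gp G y P rs as * h y (n # as)) x)"
      by (intro sum.cong refl pd_sum[OF finite_LS] differentiable_mult dT dg dh)
    also have "\<dots> = (\<Sum>rs\<in>LS P. \<Sum>as\<in>LS P. (N rs + A2 rs + A3 rs) * g rs as * hh as
        + Tt rs * (PG1 rs as + PG2 rs as) * hh as + Tt rs * g rs as * (H5 as + H6 as))"
    proof (intro sum.cong refl)
      fix rs as :: "'n list" assume r: "rs \<in> LS P" and a: "as \<in> LS P"
      show "pd s (\<lambda>y. T y (bL @ rs) * gp G y P rs as * h y (n # as)) x =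
         (N rs + A2 rs + A3 rs) * g rs as * hh as
        + Tt rs * (PG1 rs as + PG2 rs as) * hh as + Tt rs * g rs as * (H5 as + H6 as)"
        unfolding pd_mult3[OF dT[OF r] dg dh[OF a]] pdT[OF r] pdg[OF r a] pdh[OF a]
        unfolding Tt_def g_def hh_def ..
    qed
    finally show ?thesis .
  qed
  have I: "(\<Sum>rs\<in>LS P. \<Sum>as\<in>LS P. N rs * g rs as * hh as) = Cc G P (nabla G T) h x (s # L)"
    unfolding Cc_def N_def g_def hh_def using L by (simp add: bL_def n_def)
  have CcU: "Cc G P T h x (L[k:=l]) = (\<Sum>rs\<in>LS P. \<Sum>as\<in>LS P. T x (bL[k:=l] @ rs) * g rs as * hh as)"
    if "k < q" for k l
  proof -
    have "L[k:=l] = bL[k:=l] @ [n]" using that lbL by (simp add: Leq list_update_append1)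
    then show ?thesis unfolding Cc_def g_def hh_def by simp
  qed
  have II: "(\<Sum>rs\<in>LS P. \<Sum>as\<in>LS P. A2 rs * g rs as * hh as) =
      (\<Sum>k<q. \<Sum>l\<in>UNIV. ?C l s (L!k) * Cc G P T h x (L[k:=l]))"
  proof -
    have "(\<Sum>rs\<in>LS P. \<Sum>as\<in>LS P. A2 rs * g rs as * hh as) =
       (\<Sum>rs\<in>LS P. \<Sum>as\<in>LS P. \<Sum>k<q. \<Sum>l\<in>UNIV. ?C l s (L!k) * (T x (bL[k:=l] @ rs) * g rs as * hh as))"
      unfolding A2_def by (simp add: sum_distrib_right mult.assoc)
    also have "\<dots> = (\<Sum>k<q. \<Sum>l\<in>UNIV. \<Sum>rs\<in>LS P. \<Sum>as\<in>LS P. ?C l s (L!k) * (T x (bL[k:=l] @ rs) * g rs as * hh as))"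
      by (rule swap22)
    also have "\<dots> = (\<Sum>k<q. \<Sum>l\<in>UNIV. ?C l s (L!k) * Cc G P T h x (L[k:=l]))"
      by (intro sum.cong refl) (simp add: CcU sum_distrib_left)
    finally show ?thesis .
  qed
  have III: "(\<Sum>rs\<in>LS P. \<Sum>as\<in>LS P. Tt rs * g rs as * H5 as) =
      (\<Sum>l\<in>UNIV. ?C l s n * Cc G P T h x (bL @ [l]))"
  proof -
    have "(\<Sum>rs\<in>LS P. \<Sum>as\<in>LS P. Tt rs * g rs as * H5 as) =
       (\<Sum>rs\<in>LS P. \<Sum>as\<in>LS P. \<Sum>l\<in>UNIV. ?C l s n * (T x (bL @ rs) * g rs as * h x (l # as)))"
      unfolding H5_def Tt_def by (simp add: sum_distrib_left algebra_simps)
    also have "\<dots> = (\<Sum>l\<in>UNIV. \<Sum>rs\<in>LS P. \<Sum>as\<in>LS P. ?C l s n * (T x (bL @ rs) * g rs as * h x (l # as)))"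
      by (rule swap3)
    also have "\<dots> = (\<Sum>l\<in>UNIV. ?C l s n * Cc G P T h x (bL @ [l]))"
      by (intro sum.cong refl) (simp add: Cc_def g_def sum_distrib_left)
    finally show ?thesis .
  qed
  define E3 where "E3 = (\<lambda>j rs as l. ?C l s (rs!j) * T x (bL @ rs[j:=l]) * g rs as * hh as)"
  define E4 where "E4 = (\<lambda>j rs as l. - (?C (rs!j) s l * Tt rs * g (rs[j:=l]) as * hh as))"
  have IV: "(\<Sum>rs\<in>LS P. \<Sum>as\<in>LS P. A3 rs * g rs as * hh as + Tt rs * PG1 rs as * hh as) = 0"
  proof -
    have a: "(\<Sum>rs\<in>LS P. \<Sum>as\<in>LS P. A3 rs * g rs as * hh as) = (\<Sum>j<P. \<Sum>rs\<in>LS P. \<Sum>as\<in>LS P. \<Sum>l\<in>UNIV. E3 j rs as l)"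
    proof -
      have "(\<Sum>rs\<in>LS P. \<Sum>as\<in>LS P. A3 rs * g rs as * hh as) = (\<Sum>rs\<in>LS P. \<Sum>as\<in>LS P. \<Sum>j<P. \<Sum>l\<in>UNIV. E3 j rs as l)"
        unfolding A3_def E3_def by (simp add: sum_distrib_right)
      then show ?thesis by (rule trans) (rule swap3)
    qed
    have b: "(\<Sum>rs\<in>LS P. \<Sum>as\<in>LS P. Tt rs * PG1 rs as * hh as) = (\<Sum>j<P. \<Sum>rs\<in>LS P. \<Sum>as\<in>LS P. \<Sum>l\<in>UNIV. E4 j rs as l)"
    proof -
      have "(\<Sum>rs\<in>LS P. \<Sum>as\<in>LS P. Tt rs * PG1 rs as * hh as) = (\<Sum>rs\<in>LS P. \<Sum>as\<in>LS P. \<Sum>j<P. \<Sum>l\<in>UNIV. E4 j rs as l)"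
        unfolding PG1_def E4_def by (simp add: sum_distrib_right sum_distrib_left algebra_simps)
      then show ?thesis by (rule trans) (rule swap3)
    qed
    have c: "(\<Sum>rs\<in>LS P. \<Sum>as\<in>LS P. \<Sum>l\<in>UNIV. E4 j rs as l) = - (\<Sum>rs\<in>LS P. \<Sum>as\<in>LS P. \<Sum>l\<in>UNIV. E3 j rs as l)"
      if j: "j < P" for j
    proof -
      have "(\<Sum>rs\<in>LS P. \<Sum>as\<in>LS P. \<Sum>l\<in>UNIV. E4 j rs as l) = (\<Sum>as\<in>LS P. \<Sum>rs\<in>LS P. \<Sum>l\<in>UNIV. E4 j rs as l)"
        by (rule sum.swap)
      also have "\<dots> = (\<Sum>as\<in>LS P. \<Sum>rs\<in>LS P. \<Sum>l\<in>UNIV. E4 j (rs[j:=l]) as (rs!j))"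
        by (intro sum.cong refl reindex_upd[OF j])
      also have "\<dots> = (\<Sum>as\<in>LS P. \<Sum>rs\<in>LS P. \<Sum>l\<in>UNIV. - E3 j rs as l)"
        by (intro sum.cong refl) (use j in \<open>auto simp: E3_def E4_def Tt_def LS_def\<close>)
      also have "\<dots> = - (\<Sum>rs\<in>LS P. \<Sum>as\<in>LS P. \<Sum>l\<in>UNIV. E3 j rs as l)"
        by (simp add: sum_negf) (rule sum.swap)
      finally show ?thesis .
    qed
    show ?thesis unfolding sum.distrib a b using c by (simp add: sum.distrib[symmetric])
  qed
  define E6 where "E6 = (\<lambda>j rs as l. ?C l s (as!j) * Tt rs * g rs as * h x (n # as[j:=l]))"
  define E5 where "E5 = (\<lambda>j rs as l. - (?C (as!j) s l * Tt rs * g rs (as[j:=l]) * hh as))"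
  have V: "(\<Sum>rs\<in>LS P. \<Sum>as\<in>LS P. Tt rs * PG2 rs as * hh as + Tt rs * g rs as * H6 as) = 0"
  proof -
    have a: "(\<Sum>rs\<in>LS P. \<Sum>as\<in>LS P. Tt rs * g rs as * H6 as) = (\<Sum>j<P. \<Sum>rs\<in>LS P. \<Sum>as\<in>LS P. \<Sum>l\<in>UNIV. E6 j rs as l)"
    proof -
      have "(\<Sum>rs\<in>LS P. \<Sum>as\<in>LS P. Tt rs * g rs as * H6 as) = (\<Sum>rs\<in>LS P. \<Sum>as\<in>LS P. \<Sum>j<P. \<Sum>l\<in>UNIV. E6 j rs as l)"
        unfolding H6_def E6_def by (simp add: sum_distrib_left algebra_simps)
      then show ?thesis by (rule trans) (rule swap3)
    qed
    have b: "(\<Sum>rs\<in>LS P. \<Sum>as\<in>LS P. Tt rs * PG2 rs as * hh as) = (\<Sum>j<P. \<Sum>rs\<in>LS P. \<Sum>as\<in>LS P. \<Sum>l\<in>UNIV. E5 j rs as l)"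
    proof -
      have "(\<Sum>rs\<in>LS P. \<Sum>as\<in>LS P. Tt rs * PG2 rs as * hh as) = (\<Sum>rs\<in>LS P. \<Sum>as\<in>LS P. \<Sum>j<P. \<Sum>l\<in>UNIV. E5 j rs as l)"
        unfolding PG2_def E5_def by (simp add: sum_distrib_right sum_distrib_left algebra_simps)
      then show ?thesis by (rule trans) (rule swap3)
    qed
    have c: "(\<Sum>rs\<in>LS P. \<Sum>as\<in>LS P. \<Sum>l\<in>UNIV. E5 j rs as l) = - (\<Sum>rs\<in>LS P. \<Sum>as\<in>LS P. \<Sum>l\<in>UNIV. E6 j rs as l)"
      if j: "j < P" for j
    proof -
      have "(\<Sum>rs\<in>LS P. \<Sum>as\<in>LS P. \<Sum>l\<in>UNIV. E5 j rs as l) = (\<Sum>rs\<in>LS P. \<Sum>as\<in>LS P. \<Sum>l\<in>UNIV. E5 j rs (as[j:=l]) (as!j))"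
        by (intro sum.cong refl reindex_upd[OF j])
      also have "\<dots> = (\<Sum>rs\<in>LS P. \<Sum>as\<in>LS P. \<Sum>l\<in>UNIV. - E6 j rs as l)"
        by (intro sum.cong refl) (use j in \<open>auto simp: E5_def E6_def hh_def LS_def\<close>)
      also have "\<dots> = - (\<Sum>rs\<in>LS P. \<Sum>as\<in>LS P. \<Sum>l\<in>UNIV. E6 j rs as l)"
        by (simp add: sum_negf)
      finally show ?thesis .
    qed
    show ?thesis unfolding sum.distrib a b using c by (simp add: sum.distrib[symmetric])
  qed
  have pdC2: "pd s (\<lambda>y. Cc G P T h y L) x =
      (\<Sum>rs\<in>LS P. \<Sum>as\<in>LS P. N rs * g rs as * hh as) + (\<Sum>rs\<in>LS P. \<Sum>as\<in>LS P. A2 rs * g rs as * hh as)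
      + (\<Sum>rs\<in>LS P. \<Sum>as\<in>LS P. Tt rs * g rs as * H5 as)
      + (\<Sum>rs\<in>LS P. \<Sum>as\<in>LS P. A3 rs * g rs as * hh as + Tt rs * PG1 rs as * hh as)
      + (\<Sum>rs\<in>LS P. \<Sum>as\<in>LS P. Tt rs * PG2 rs as * hh as + Tt rs * g rs as * H6 as)"
    unfolding pdC sum.distrib[symmetric] by (intro sum.cong refl) (simp add: algebra_simps)
  have conn: "(\<Sum>k<length L. \<Sum>l\<in>UNIV. ?C l s (L!k) * Cc G P T h x (L[k:=l])) =
      (\<Sum>k<q. \<Sum>l\<in>UNIV. ?C l s (L!k) * Cc G P T h x (L[k:=l])) + (\<Sum>l\<in>UNIV. ?C l s n * Cc G P T h x (bL @ [l]))"
  proof -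
    have "L!q = n" "\<And>l. L[q:=l] = bL @ [l]" using lbL by (simp_all add: Leq list_update_append nth_append)
    then show ?thesis unfolding lL by simp
  qed
  have "nabla G (Cc G P T h) x (s # L) = pd s (\<lambda>y. Cc G P T h y L) x -
      (\<Sum>k<length L. \<Sum>l\<in>UNIV. ?C l s (L!k) * Cc G P T h x (L[k:=l]))"
    by simp
  also have "\<dots> = Cc G P (nabla G T) h x (s # L)"
    unfolding pdC2 conn I II III IV V by simp
  finally show ?thesis .
qed

end

lemma perm_idx_length [simp]: "length (perm_idx \<sigma> L) = length L"
  by (simp add: perm_idx_def)

lemma perm_idx_id [simp]: "perm_idx id L = L"
  by (simp add: perm_idx_def map_nth)

lemma perm_idx_comp:
  assumes "\<And>k. k < length L \<Longrightarrow> t k < length L"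
  shows "perm_idx t (perm_idx \<pi> L) = perm_idx (\<pi> \<circ> t) L"
  unfolding perm_idx_def using assms by (intro nth_equalityI) auto

lemma sum_perms2:
  assumes "a \<noteq> b"
  shows "(\<Sum>p\<in>{p. p permutes {a, b}}. f p) = f id + f (Transposition.transpose a b)"
proof -
  have "(\<Sum>p\<in>{p. p permutes insert a {b}}. f p) =
     (\<Sum>c\<in>insert a {b}. \<Sum>q\<in>{p. p permutes {b}}. f (Transposition.transpose a c \<circ> q))"
    by (rule sum_over_permutations_insert) (use assms in auto)
  then show ?thesis using assms by simp
qed

lemma sum_perms_comp:
  assumes "t permutes A" "t \<circ> t = id"
  shows "(\<Sum>p\<in>{p. p permutes A}. f p) = (\<Sum>p\<in>{p. p permutes A}. f (p \<circ> t))"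
  by (rule sum.reindex_bij_witness[where i="\<lambda>p. p \<circ> t" and j="\<lambda>p. p \<circ> t"])
     (use assms in \<open>auto simp: comp_assoc intro: permutes_compose\<close>)

lemma symmetrize2:
  assumes "a \<noteq> b"
  shows "symmetrize {a, b} F L = (F L + F (perm_idx (Transposition.transpose a b) L)) / 2"
  unfolding symmetrize_def sum_perms2[OF assms] using assms by simp

context
  fixes U :: "(real^'n::finite) set" and G :: "real^'n \<Rightarrow> real^'n^'n"
  assumes U: "open U" and mf: "metric_field U G"
begin

lemma smooth_nabla:
  assumes "\<And>is. length is = r \<Longrightarrow> smooth U (\<lambda>y. T y is)" "length is = Suc r"
  shows "smooth U (\<lambda>y. nabla G T y is)"
proof -
  obtain s js where isd: "is = s # js" and js: "length js = r" using assms(2) by (cases "is") auto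
  have "smooth U (\<lambda>y. pd s (\<lambda>y. T y js) y -
     (\<Sum>k<length js. \<Sum>l\<in>UNIV. christoffel G y l s (js ! k) * T y (js[k := l])))"
    by (intro smooth_diff[OF U] smooth_pd[OF U] smooth_sum[OF U] smooth_mult[OF U] assms(1)
        smooth_christoffel[OF U mf] finite_lessThan finite) (auto simp: js)
  then show ?thesis by (simp add: isd)
qed

lemma smooth_Cc:
  assumes "\<And>is. length is = length L - 1 + P \<Longrightarrow> smooth U (\<lambda>y. T y is)"
    "\<And>is. length is = Suc P \<Longrightarrow> smooth U (\<lambda>y. h y is)"
  shows "smooth U (\<lambda>y. Cc G P T h y L)"
  unfolding Cc_def
  by (intro smooth_sum[OF U] smooth_mult[OF U] finite_LS assms smooth_gp[OF U mf]) (auto simp: LS_def)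

end

lemma nabla2: "nabla G T x [s,a,b] = pd s (\<lambda>y. T y [a,b]) x
   - (\<Sum>l\<in>UNIV. christoffel G x l s a * T x [l,b]) - (\<Sum>l\<in>UNIV. christoffel G x l s b * T x [a,l])"
  by simp

lemma nabla3: "nabla G T x [w,s,a,b] = pd w (\<lambda>y. T y [s,a,b]) x
   - (\<Sum>l\<in>UNIV. christoffel G x l w s * T x [l,a,b]) - (\<Sum>l\<in>UNIV. christoffel G x l w a * T x [s,l,b])
   - (\<Sum>l\<in>UNIV. christoffel G x l w b * T x [s,a,l])"
  by (simp add: eval_nat_numeral)

lemma perm_idx_t23: "perm_idx (Transposition.transpose 2 3) [w, s, a, b] = [w, s, b, a]"
  by (simp add: perm_idx_def Transposition.transpose_def eval_nat_numeral)

lemma perm_idx_t01: "perm_idx (Transposition.transpose 0 1) [a, b] = [b, a]"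
  by (simp add: perm_idx_def Transposition.transpose_def eval_nat_numeral)

lemma perm_idx_t12: "perm_idx (Transposition.transpose 1 2) (w # s # a # rs) = w # a # s # rs"
  unfolding perm_idx_def
proof (intro nth_equalityI)
  fix k assume "k < length (map (\<lambda>k. (w # s # a # rs) ! Transposition.transpose 1 2 k) [0..<length (w # s # a # rs)])"
  then have k: "k < length (w # s # a # rs)" by simp
  consider "k = 0" | "k = 1" | "k = 2" | "k \<ge> 3" by linarith
  then show "map (\<lambda>k. (w # s # a # rs) ! Transposition.transpose 1 2 k) [0..<length (w # s # a # rs)] ! k = (w # a # s # rs) ! k"
  proof cases
    case 4
    have "\<exists>m. k = Suc (Suc (Suc m))" using 4 by presburger
    then obtain m where m: "k = Suc (Suc (Suc m))" by blast
    have "Transposition.transpose 1 2 k = k" using 4 by (simp add: Transposition.transpose_def)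
    then show ?thesis using k m by (simp del: upt_Suc)
  qed (use k in \<open>simp_all add: Transposition.transpose_def del: upt_Suc\<close>)
qed simp


lemma len4: assumes "length M = 4" obtains w s a b where "M = [w,s,a,b]"
  using assms by (auto simp: length_Suc_conv eval_nat_numeral)

lemma len2: assumes "length M = 2" obtains a b where "M = [a,b]"
  using assms by (auto simp: length_Suc_conv eval_nat_numeral)

lemma lin4: "((p1::real) + p2) / 2 - (a1 + a2) / 2 - (b1 + b2) / 2 - (c1 + c2) / 2 =
   ((p1 - a1 - b1 - c1) + (p2 - a2 - c2 - b2)) / 2"
  by argo

theorem proposition3:
  fixes U :: "(real^'n::finite) set" and G :: "real^'n \<Rightarrow> real^'n^'n"
    and f h :: "real^'n \<Rightarrow> 'n list \<Rightarrow> real" and p :: nat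
  assumes "open U"
    and "metric_field U G"
    and "1 \<le> p"
    and "AAT U G p f"
    and "antisym_tensor_field U p h"
    and "\<forall>x\<in>U. \<forall>is. length is = Suc p \<longrightarrow> nabla G h x is = 0"
  shows "SAT U G 2 (Kfield G p f h)"
proof -
  note U = assms(1) and mf = assms(2)
  obtain P where p: "p = Suc P" using assms(3) by (cases p) auto
  have fs: "smooth U (\<lambda>y. f y is)" if "length is = p" for "is"
    using assms(4) that Cinf_on_smooth[OF U] unfolding AAT_def antisym_tensor_field_def tensor_field_def by blast
  have hs: "smooth U (\<lambda>y. h y is)" if "length is = p" for "is"
    using assms(5) that Cinf_on_smooth[OF U] unfolding antisym_tensor_field_def tensor_field_def by blast
  have hp: "nabla G h x is = 0" if "x \<in> U" "length is = Suc p" for x "is"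
    using assms(6) that by blast
  have nfs: "smooth U (\<lambda>y. nabla G f y is)" if "length is = Suc p" for "is"
    by (rule smooth_nabla[OF U mf fs that]) 
  define K where "K = Kfield G p f h"
  define C1 where "C1 = Cc G P f h"
  define C2 where "C2 = Cc G P (nabla G f) h"
  define C3 where "C3 = Cc G P (nabla G (nabla G f)) h"
  have contrCc: "contr G p f h y a b = C1 y [a,b]" for y a b
    unfolding contr_def C1_def Cc_def LS_def gp_def using p by simp
  have Kab: "K y [a,b] = (C1 y [a,b] + C1 y [b,a]) / 2" for y a b
    unfolding K_def Kfield_def contrCc by simp
  have sC1: "smooth U (\<lambda>y. C1 y [a,b])" for a b
    unfolding C1_def by (rule smooth_Cc[OF U mf]) (use fs hs p in auto)
  have sC2: "smooth U (\<lambda>y. C2 y [s,a,b])" for s a b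
    unfolding C2_def by (rule smooth_Cc[OF U mf]) (use nfs hs p in auto)
  have sK: "smooth U (\<lambda>y. K y [a,b])" for a b
    unfolding Kab by (intro smooth_divide[OF U] smooth_add[OF U] sC1 smooth_const[OF U]) auto
  have e1: "nabla G C1 x [s,a,b] = C2 x [s,a,b]" if x: "x \<in> U" for x s a b
    unfolding C1_def C2_def
    by (rule nabla_Cc[OF U mf x]) (use x p fs hs hp smooth_diffble[OF U] in auto)
  have pdK: "pd s (\<lambda>y. K y [a,b]) x = (pd s (\<lambda>y. C1 y [a,b]) x + pd s (\<lambda>y. C1 y [b,a]) x) / 2"
    if x: "x \<in> U" for x s a b
  proof -
    have kf: "(\<lambda>y. K y [a,b]) = (\<lambda>y. inverse 2 * (C1 y [a,b] + C1 y [b,a]))"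
      by (simp add: Kab fun_eq_iff field_simps)
    show ?thesis
      unfolding kf pd_cmult[OF differentiable_add[OF smooth_diffble[OF U sC1 x] smooth_diffble[OF U sC1 x]]]
        pd_add[OF smooth_diffble[OF U sC1 x] smooth_diffble[OF U sC1 x]]
      by simp
  qed
  have nK: "nabla G K x [s,a,b] = (C2 x [s,a,b] + C2 x [s,b,a]) / 2" if x: "x \<in> U" for x s a b
  proof -
    have A: "(\<Sum>l\<in>UNIV. christoffel G x l s a * K x [l,b]) =
      ((\<Sum>l\<in>UNIV. christoffel G x l s a * C1 x [l,b]) + (\<Sum>l\<in>UNIV. christoffel G x l s a * C1 x [b,l])) / 2"
      by (simp add: Kab sum.distrib[symmetric] sum_divide_distrib algebra_simps)
    have B: "(\<Sum>l\<in>UNIV. christoffel G x l s b * K x [a,l]) =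
      ((\<Sum>l\<in>UNIV. christoffel G x l s b * C1 x [a,l]) + (\<Sum>l\<in>UNIV. christoffel G x l s b * C1 x [l,a])) / 2"
      by (simp add: Kab sum.distrib[symmetric] sum_divide_distrib algebra_simps)
    show ?thesis
      using e1[OF x, of s a b] e1[OF x, of s b a] pdK[OF x, of s a b] A B
      unfolding nabla2 by (simp add: field_simps)
  qed
  have e2: "nabla G C2 x [w,s,a,b] = C3 x [w,s,a,b]" if x: "x \<in> U" for x w s a b
    unfolding C2_def C3_def
    by (rule nabla_Cc[OF U mf x]) (use x p nfs hs hp smooth_diffble[OF U] in auto)
  have nnK: "nabla G (nabla G K) x [w,s,a,b] = (C3 x [w,s,a,b] + C3 x [w,s,b,a]) / 2"
    if x: "x \<in> U" for x w s a b
  proof -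
    have pd1: "pd w (\<lambda>y. nabla G K y [s,a,b]) x = pd w (\<lambda>y. inverse 2 * (C2 y [s,a,b] + C2 y [s,b,a])) x"
      by (rule pd_cong[OF U x]) (simp add: nK field_simps del: nabla.simps)
    have pd2: "pd w (\<lambda>y. inverse 2 * (C2 y [s,a,b] + C2 y [s,b,a])) x =
       (pd w (\<lambda>y. C2 y [s,a,b]) x + pd w (\<lambda>y. C2 y [s,b,a]) x) / 2"
      unfolding pd_cmult[OF differentiable_add[OF smooth_diffble[OF U sC2 x] smooth_diffble[OF U sC2 x]]]
        pd_add[OF smooth_diffble[OF U sC2 x] smooth_diffble[OF U sC2 x]]
      by simp
    have A: "(\<Sum>l\<in>UNIV. christoffel G x l w s * nabla G K x [l,a,b]) =
      ((\<Sum>l\<in>UNIV. christoffel G x l w s * C2 x [l,a,b]) + (\<Sum>l\<in>UNIV. christoffel G x l w s * C2 x [l,b,a])) / 2"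
      using x by (simp add: nK sum.distrib[symmetric] sum_divide_distrib algebra_simps del: nabla.simps)
    have B: "(\<Sum>l\<in>UNIV. christoffel G x l w a * nabla G K x [s,l,b]) =
      ((\<Sum>l\<in>UNIV. christoffel G x l w a * C2 x [s,l,b]) + (\<Sum>l\<in>UNIV. christoffel G x l w a * C2 x [s,b,l])) / 2"
      using x by (simp add: nK sum.distrib[symmetric] sum_divide_distrib algebra_simps del: nabla.simps)
    have C: "(\<Sum>l\<in>UNIV. christoffel G x l w b * nabla G K x [s,a,l]) =
      ((\<Sum>l\<in>UNIV. christoffel G x l w b * C2 x [s,a,l]) + (\<Sum>l\<in>UNIV. christoffel G x l w b * C2 x [s,l,a])) / 2"
      using x by (simp add: nK sum.distrib[symmetric] sum_divide_distrib algebra_simps del: nabla.simps)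
    show ?thesis
      unfolding nabla3 pd1 pd2 A B C e2[OF x, symmetric] nabla3
      by (rule lin4[of "pd w (\<lambda>y. C2 y [s,a,b]) x" "pd w (\<lambda>y. C2 y [s,b,a]) x"
          "\<Sum>l\<in>UNIV. christoffel G x l w s * C2 x [l, a, b]" "\<Sum>l\<in>UNIV. christoffel G x l w s * C2 x [l, b, a]"
          "\<Sum>l\<in>UNIV. christoffel G x l w a * C2 x [s, l, b]" "\<Sum>l\<in>UNIV. christoffel G x l w a * C2 x [s, b, l]"
          "\<Sum>l\<in>UNIV. christoffel G x l w b * C2 x [s, a, l]" "\<Sum>l\<in>UNIV. christoffel G x l w b * C2 x [s, l, a]"])
  qed
  have Banti: "C3 x (perm_idx (Transposition.transpose 1 2) M) = - C3 x M"
    if x: "x \<in> U" and M: "length M = 4" for x M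
  proof -
    obtain w s a b where Mw: "M = [w,s,a,b]" using M by (rule len4)
    have pm: "perm_idx (Transposition.transpose 1 2) M = [w,a,s,b]"
      using perm_idx_t12[of w s a "[b]"] Mw by simp
    have anti: "nabla G (nabla G f) x (w # a # s # rs) = - nabla G (nabla G f) x (w # s # a # rs)"
      if "rs \<in> LS P" for rs
    proof -
      have "length (w # s # a # rs) = p + 2" using that p by (simp add: LS_def)
      then have z: "symmetrize {1..<3} (nabla G (nabla G f) x) (w # s # a # rs) = 0"
        using assms(4) x unfolding AAT_def by blast
      have se: "{1..<3::nat} = {1, 2}" by auto
      have s12: "symmetrize {1::nat, 2} F L = (F L + F (perm_idx (Transposition.transpose 1 2) L)) / 2"
        for F :: "'n list \<Rightarrow> real" and L by (rule symmetrize2) simp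
      have "symmetrize {1::nat, 2} (nabla G (nabla G f) x) (w # s # a # rs) = 0"
        using z by (simp only: se)
      then have "(nabla G (nabla G f) x (w # s # a # rs) + nabla G (nabla G f) x (w # a # s # rs)) / 2 = 0"
        by (simp only: s12 perm_idx_t12)
      then show ?thesis by (simp del: nabla.simps)
    qed
    show ?thesis unfolding Mw perm_idx_t12[of w s a "[b]"] C3_def Cc_def
      by (simp add: anti sum_negf del: nabla.simps)
  qed
  have Phi: "nabla G (nabla G K) x M = (C3 x M + C3 x (perm_idx (Transposition.transpose 2 3) M)) / 2"
    if x: "x \<in> U" and M: "length M = 4" for x M
  proof -
    obtain w s a b where Mw: "M = [w,s,a,b]" using M by (rule len4)
    show ?thesis unfolding Mw perm_idx_t23 using nnK[OF x] by simp
  qed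
  have symm0: "symmetrize {1..<4} (nabla G (nabla G K) x) L = 0" if x: "x \<in> U" and L: "length L = 4" for x L
  proof -
    let ?A = "{1..<4::nat}"
    let ?t12 = "Transposition.transpose (1::nat) 2"
    let ?t23 = "Transposition.transpose (2::nat) 3"
    have t12: "?t12 permutes ?A" "?t12 \<circ> ?t12 = id" by (auto intro: permutes_swap_id)
    have t23: "?t23 permutes ?A" "?t23 \<circ> ?t23 = id" by (auto intro: permutes_swap_id)
    have bd12: "\<And>k. k < length L \<Longrightarrow> ?t12 k < length L"
      using L by (auto simp: Transposition.transpose_def)
    have bd23: "\<And>k. k < length L \<Longrightarrow> ?t23 k < length L"
      using L by (auto simp: Transposition.transpose_def)
    define S where "S = (\<Sum>\<pi>\<in>{\<pi>. \<pi> permutes ?A}. C3 x (perm_idx \<pi> L))"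
    have "S = (\<Sum>\<pi>\<in>{\<pi>. \<pi> permutes ?A}. C3 x (perm_idx (\<pi> \<circ> ?t12) L))"
      unfolding S_def by (rule sum_perms_comp[OF t12])
    also have "\<dots> = (\<Sum>\<pi>\<in>{\<pi>. \<pi> permutes ?A}. C3 x (perm_idx ?t12 (perm_idx \<pi> L)))"
      by (intro sum.cong refl) (simp only: perm_idx_comp[OF bd12])
    also have "\<dots> = - S"
      unfolding S_def sum_negf[symmetric] by (intro sum.cong refl Banti[OF x]) (simp add: L)
    finally have S0: "S = 0" by simp
    have "(\<Sum>\<pi>\<in>{\<pi>. \<pi> permutes ?A}. C3 x (perm_idx ?t23 (perm_idx \<pi> L))) =
        (\<Sum>\<pi>\<in>{\<pi>. \<pi> permutes ?A}. C3 x (perm_idx (\<pi> \<circ> ?t23) L))"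
      by (intro sum.cong refl) (simp only: perm_idx_comp[OF bd23])
    also have "\<dots> = S"
      unfolding S_def by (rule sum_perms_comp[OF t23, symmetric])
    finally have S1: "(\<Sum>\<pi>\<in>{\<pi>. \<pi> permutes ?A}. C3 x (perm_idx ?t23 (perm_idx \<pi> L))) = 0"
      using S0 by simp
    have "(\<Sum>\<pi>\<in>{\<pi>. \<pi> permutes ?A}. nabla G (nabla G K) x (perm_idx \<pi> L)) =
       (\<Sum>\<pi>\<in>{\<pi>. \<pi> permutes ?A}. (C3 x (perm_idx \<pi> L) + C3 x (perm_idx ?t23 (perm_idx \<pi> L))) / 2)"
      by (intro sum.cong refl) (simp add: Phi[OF x] L)
    also have "\<dots> = (S + (\<Sum>\<pi>\<in>{\<pi>. \<pi> permutes ?A}. C3 x (perm_idx ?t23 (perm_idx \<pi> L)))) / 2"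
      unfolding S_def by (simp add: sum_divide_distrib[symmetric] sum.distrib)
    finally show ?thesis unfolding symmetrize_def using S0 S1 by simp
  qed
  have tf: "tensor_field U 2 K"
    unfolding tensor_field_def
  proof (intro allI impI)
    fix "is" :: "'n list" assume "length is = 2"
    then obtain a b where "is = [a,b]" by (rule len2)
    then show "Cinf_on U (\<lambda>x. K x is)" using sK Cinf_on_smooth[OF U] by simp
  qed
  have sy: "K x is = symmetrize {0..<2} (K x) is" if len: "length is = 2" for x "is"
  proof -
    obtain a b where ab: "is = [a,b]" using len by (rule len2)
    have se: "{0..<2::nat} = {0, 1}" by auto
    have s01: "symmetrize {0::nat, 1} F L = (F L + F (perm_idx (Transposition.transpose 0 1) L)) / 2"
      for F :: "'n list \<Rightarrow> real" and L by (rule symmetrize2) simp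
    show ?thesis unfolding ab se s01 perm_idx_t01 Kab by argo
  qed
  show ?thesis
    unfolding SAT_def sym_tensor_field_def K_def[symmetric]
    using tf sy symm0 by simp
qed


end
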